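(* Let $W=a_1a_2\cdots a_n$ be a square-free word, where each $a_i$ is a single letter, and let $V=a_1^{k_1}a_2^{k_2}\cdots a_n^{k_n}$, where each $k_i$ is a positive integer. Then every square occurring as a factor of $V$ is of the form $x^{2k}$ for some positive integer $k$, where $x=a_i$ for some $i\in\{1,2,\dots,n\}$.
   Context: A square is a finite non-empty word of the form $XX$; a word is square-free if it has no factor that is a square. $x^m$ denotes the letter $x$ repeated $m$ times. *)

theory Defs
  imports Main
begin

definition is_factor :: "'a list \<Rightarrow> 'a list \<Rightarrow> bool" where
  "is_factor u w \<longleftrightarrow> (\<exists>p s. w = p @ u @ s)"

definition is_square :: "'a list \<Rightarrow> bool" where
  "is_square u \<longleftrightarrow> (\<exists>X. X \<noteq> [] \<and> u = X @ X)"

definition square_free :: "'a list \<Rightarrow> bool" where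
  "square_free w \<longleftrightarrow> \<not> (\<exists>u. is_factor u w \<and> is_square u)"

definition expand :: "'a list \<Rightarrow> nat list \<Rightarrow> 'a list" where
  "expand W ks = concat (map (\<lambda>(a, m). replicate m a) (zip W ks))"

end

theory Submission
  imports Defs
begin

lemma not_dadj: "\<not> distinct_adj xs \<Longrightarrow> \<exists>p a s. xs = p @ [a,a] @ s"
proof (induction xs)
  case Nil then show ?case by simp
next
  case (Cons x xs)
  show ?case
  proof (cases "distinct_adj xs")
    case True
    then have "xs \<noteq> [] \<and> x = hd xs" using Cons.prems by (auto simp: distinct_adj_Cons)
    then obtain ys where "xs = x # ys" by (cases xs) auto
    then have "x # xs = [] @ [x,x] @ ys" by simp
    then show ?thesis by blast
  next
    case False
    then obtain p a s where "xs = p @ [a,a] @ s" using Cons.IH by blast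
    then have "x # xs = (x # p) @ [a,a] @ s" by simp
    then show ?thesis by blast
  qed
qed

lemma sqfree_dadj: "square_free W \<Longrightarrow> distinct_adj W"
proof (rule ccontr)
  assume a: "square_free W" "\<not> distinct_adj W"
  then obtain p b s where "W = p @ [b,b] @ s" using not_dadj by blast
  then have "is_factor [b,b] W" "is_square [b,b]"
    unfolding is_factor_def is_square_def by (auto intro: exI[of _ "[b]"])
  then show False using a(1) unfolding square_free_def by blast
qed

lemma expand_Cons: "expand (a # W) (k # ks) = replicate k a @ expand W ks"
  by (simp add: expand_def)

lemma rem_expand:
  assumes "length ks = length W" "\<forall>m \<in> set ks. m > 0" "distinct_adj W"
  shows "remdups_adj (expand W ks) = W"
  using assms
proof (induction ks W rule: list_induct2)
  case Nil then show ?case by (simp add: expand_def)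
next
  case (Cons k ks a W)
  have IH: "remdups_adj (expand W ks) = W" using Cons by (auto simp: distinct_adj_Cons)
  have k: "k > 0" using Cons.prems by auto
  have "remdups_adj (replicate k a @ expand W ks) = remdups_adj (replicate k a) @ remdups_adj (expand W ks)"
  proof (rule remdups_adj_append')
    show "replicate k a = [] \<or> expand W ks = [] \<or> last (replicate k a) \<noteq> hd (expand W ks)"
    proof (cases "expand W ks = []")
      case False
      have "hd (expand W ks) = hd W" by (metis IH hd_remdups_adj)
      moreover have "W \<noteq> []" using False IH by auto
      ultimately show ?thesis using Cons.prems k by (auto simp: distinct_adj_Cons)
    qed simp
  qed
  then show ?case using IH k by (simp add: expand_Cons remdups_adj_replicate)
qed

lemma rem_prefix: "\<exists>zs. remdups_adj (xs @ ys) = remdups_adj xs @ zs"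
  by (cases "xs = []") (auto dest: remdups_adj_append''[of xs ys])

lemma rem_suffix: "\<exists>zs. remdups_adj (xs @ ys) = zs @ remdups_adj ys"
proof -
  obtain zs where "remdups_adj (rev ys @ rev xs) = remdups_adj (rev ys) @ zs"
    using rem_prefix by blast
  then have "rev (remdups_adj (xs @ ys)) = rev (remdups_adj ys) @ zs"
    by (metis remdups_adj_rev rev_append)
  then have "remdups_adj (xs @ ys) = rev zs @ remdups_adj ys"
    by (metis rev_append rev_rev_ident)
  then show ?thesis by blast
qed

lemma rem_factor: "is_factor u v \<Longrightarrow> is_factor (remdups_adj u) (remdups_adj v)"
proof -
  assume "is_factor u v"
  then obtain p s where v: "v = p @ u @ s" unfolding is_factor_def by blast
  obtain A where A: "remdups_adj (p @ (u @ s)) = A @ remdups_adj (u @ s)" using rem_suffix by blast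
  obtain B where B: "remdups_adj (u @ s) = remdups_adj u @ B" using rem_prefix by blast
  show ?thesis unfolding is_factor_def using v A B by auto
qed

lemma factor_trans: "is_factor u v \<Longrightarrow> is_factor v w \<Longrightarrow> is_factor u w"
  unfolding is_factor_def by (metis append.assoc)

lemma sq_factor_sq: "is_factor (y # R @ R) Z \<Longrightarrow> R \<noteq> [] \<Longrightarrow> \<not> square_free Z"
proof -
  assume a: "is_factor (y # R @ R) Z" "R \<noteq> []"
  have "is_factor (R @ R) (y # R @ R)" unfolding is_factor_def
    by (rule exI[of _ "[y]"], rule exI[of _ "[]"]) simp
  then have "is_factor (R @ R) Z" using a factor_trans by blast
  then show ?thesis using a(2) unfolding square_free_def is_square_def by blast
qed

theorem lemma2p8:
  fixes W :: "'a list" and ks :: "nat list"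
  assumes "square_free W"
    and "length ks = length W"
    and "\<forall>m \<in> set ks. m > 0"
    and "is_factor u (expand W ks)"
    and "is_square u"
  shows "\<exists>k x. k > 0 \<and> x \<in> set W \<and> u = replicate (2 * k) x"
proof -
  have remW: "remdups_adj (expand W ks) = W"
    using rem_expand assms sqfree_dadj by blast
  have fac: "is_factor (remdups_adj u) W" using rem_factor[OF assms(4)] remW by simp
  obtain X where X: "X \<noteq> []" "u = X @ X" using assms(5) unfolding is_square_def by blast
  obtain y X' where yX: "X = y # X'" using X(1) by (cases X) auto
  define R where "R = remdups_adj X"
  have hdR: "R = y # tl R" unfolding R_def yX by simp
  then obtain R' where R': "R = y # R'" by blast
  have ru: "remdups_adj u = remdups_adj (X @ [y]) @ tl R"
    unfolding X(2) R_def using remdups_adj_append[of X y X'] by (simp only: yX[symmetric])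
  have setu: "set u \<subseteq> set W"
  proof -
    have "set (remdups_adj u) \<subseteq> set W" using fac unfolding is_factor_def by auto
    then show ?thesis by simp
  qed
  show ?thesis
  proof (cases "last X = y")
    case False
    have "remdups_adj (X @ [y]) = R @ [y]"
      using False X(1) unfolding R_def
      using remdups_adj_append'[of X "[y]"] by simp
    then have "remdups_adj u = [] @ R @ R" using ru R' by simp
    then have "is_factor (R @ R) W" using fac by simp
    moreover have "R \<noteq> []" by (metis hdR list.distinct(1))
    ultimately show ?thesis using assms(1) unfolding square_free_def is_square_def by blast
  next
    case True
    have "remdups_adj (X @ [y]) = R"
    proof -
      have e: "X = butlast X @ [y]" using True X(1) by (metis append_butlast_last_id)
      have B: "X @ [y] = butlast X @ [y, y]" by (subst e) simp
      have "remdups_adj (X @ [y]) = remdups_adj (butlast X @ [y, y])" by (simp only: B)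
      also have "\<dots> = remdups_adj (butlast X @ [y])"
        by (simp only: remdups_adj_append_two) simp
      also have "\<dots> = remdups_adj X" by (simp only: e[symmetric])
      finally show ?thesis unfolding R_def .
    qed
    then have ru2: "remdups_adj u = y # tl R @ tl R" using ru R' by simp
    show ?thesis
    proof (cases "tl R = []")
      case False
      then show ?thesis using sq_factor_sq[of y "tl R" W] fac ru2 assms(1) by simp
    next
      case True
      then have "remdups_adj X = [y]" using R' R_def by simp
      then have "X = replicate (length X) y" by (rule remdups_adj_singleton)
      then have "u = replicate (2 * length X) y" using X(2)
        by (metis mult_2 replicate_add)
      moreover have "y \<in> set W" using setu X yX by auto
      ultimately show ?thesis using X(1) by auto
    qed
  qed
qed

end
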